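(* For every sentence $\alpha$ there is a sentence $\gamma$ in assignment normal form such that $\alpha\leftrightarrow\gamma$ is a theorem of $\mathbf{LEL}$.
   Context: Fix a nonempty finite set $\mathbf{A}$ of agents, a countable set $\mathbf{X}$ of variables disjoint from $\mathbf{A}$, and a countable set $\mathbf{P}$ of predicate letters. Formulas and free variables: $\phi ::= p_x \mid \top \mid \neg\phi \mid (\phi\wedge\phi) \mid [x:=a]\phi \mid \mathsf{K}_X\alpha$ ($p\in\mathbf{P}$, $x\in\mathbf{X}$, $a\in\mathbf{A}$, $X\subseteq\mathbf{X}$ finite possibly empty, $\alpha$ with no free variables), $FV(p_x)=\{x\}$, $FV(\top)=\emptyset$, $FV(\neg\phi)=FV(\phi)$, $FV(\phi\wedge\psi)=FV(\phi)\cup FV(\psi)$, $FV([x:=a]\phi)=FV(\phi)\setminus\{x\}$, $FV(\mathsf{K}_X\alpha)=X$. Sentences have no free variables. $\bot:=\neg\top$, $\langle x:=a\rangle\phi:=\neg[x:=a]\neg\phi$. $\phi[y/x]$ replaces free occurrences of $x$ by $y$ (including in index sets of $\mathsf{K}_X$); admissible if $x$ has no free occurrence within the scope of any $[y:=b]$. $[\vec{x}:=\vec{a}]\phi$ abbreviates $[x_1:=a_1]\cdots[x_n:=a_n]\phi$ for equal-length strings $\vec x,\vec a$, $\mathsf{K}_{\vec x}:=\mathsf{K}_{\{x_1,\dots,x_n\}}$, $\mathsf{K}_x:=\mathsf{K}_{\{x\}}$, $\{\vec a\}=\{a_1,\dots,a_n\}$. $\mathbf{LEL}$: axioms — propositional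 tautologies; $\mathsf{K}_X(\alpha\to\beta)\to(\mathsf{K}_X\alpha\to\mathsf{K}_X\beta)$; $\mathsf{K}_X\alpha\to\mathsf{K}_Y\alpha$ ($X\subseteq Y$); $[x:=a](\phi\to\psi)\to([x:=a]\phi\to[x:=a]\psi)$; $\langle x:=a\rangle\phi\to[x:=a]\phi$; $\phi\to[x:=a]\phi$ ($x\notin FV(\phi)$); $[y:=a]([x:=a]\phi\to\phi[y/x])$ ($\phi[y/x]$ admissible); $[x:=a][y:=b]\phi\to[y:=b][x:=a]\phi$ ($x\neq y$); $\bigwedge_{a\in\mathbf{A}}[x:=a]\phi\to\phi$; $\mathsf{K}_X\alpha\to\alpha$; $[\vec{x}:=\vec{a}](\neg\mathsf{K}_{\vec{x}}\alpha\to\mathsf{K}_{\vec{x}}[\vec{x}:=\vec{a}]\neg\mathsf{K}_{\vec{x}}\alpha)$; $[x:=a]\mathsf{K}_{x}\langle x:=a\rangle\top$; $[x:=a](p_x\to\mathsf{K}_{x}[x:=a]p_x)$; $[\vec{x}:=\vec{a}](\bigwedge_{b\in B}[x:=b]\bot\to\mathsf{K}_{\vec{x}}\bigwedge_{b\in B}[x:=b]\bot)$ with $B=\mathbf{A}\setminus\{\vec a\}$. Rules: modus ponens; from sentence $\alpha$ infer $\mathsf{K}_\emptyset\alpha$; from $\phi$ infer $[x:=a]\phi$. ($\alpha,\beta$ sentences; $\phi,\psi$ formulas.) The sentences in assignment normal form are generated by $\gamma ::= [x:=a]p_x \mid [x:=a]\bot \mid \top \mid \neg\gamma \mid (\gamma\wedge\gamma)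 \mid [\vec{x}:=\vec{a}]\mathsf{K}_{\vec{x}}\gamma$ (with $x\in\mathbf{X}$, $a\in\mathbf{A}$, $p\in\mathbf{P}$, and $\vec x,\vec a$ strings of variables and agents of equal length). *)

theory Defs
  imports "HOL-Library.Countable"
begin

text \<open>Agents: a finite (nonempty, as every type is) type 'a. Variables 'x and predicate
letters 'p: countable types. Pred p x is p_x, Asg x a phi is [x:=a]phi, K X alpha is K_X alpha.\<close>

datatype ('a, 'x, 'p) fm =
    Pred 'p 'x
  | Top
  | Neg "('a, 'x, 'p) fm"
  | Conj "('a, 'x, 'p) fm" "('a, 'x, 'p) fm"
  | Asg 'x 'a "('a, 'x, 'p) fm"
  | K "'x set" "('a, 'x, 'p) fm"

fun FV :: "('a, 'x, 'p) fm \<Rightarrow> 'x set" where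
  "FV (Pred p x) = {x}"
| "FV Top = {}"
| "FV (Neg \<phi>) = FV \<phi>"
| "FV (Conj \<phi> \<psi>) = FV \<phi> \<union> FV \<psi>"
| "FV (Asg x a \<phi>) = FV \<phi> - {x}"
| "FV (K X \<alpha>) = X"

fun wf :: "('a, 'x, 'p) fm \<Rightarrow> bool" where
  "wf (Pred p x) = True"
| "wf Top = True"
| "wf (Neg \<phi>) = wf \<phi>"
| "wf (Conj \<phi> \<psi>) = (wf \<phi> \<and> wf \<psi>)"
| "wf (Asg x a \<phi>) = wf \<phi>"
| "wf (K X \<alpha>) = (finite X \<and> wf \<alpha> \<and> FV \<alpha> = {})"

definition sentence :: "('a, 'x, 'p) fm \<Rightarrow> bool" where
  "sentence \<phi> \<longleftrightarrow> wf \<phi> \<and> FV \<phi> = {}"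

definition Bot :: "('a, 'x, 'p) fm" where "Bot = Neg Top"
definition Imp :: "('a, 'x, 'p) fm \<Rightarrow> ('a, 'x, 'p) fm \<Rightarrow> ('a, 'x, 'p) fm" where
  "Imp \<phi> \<psi> = Neg (Conj \<phi> (Neg \<psi>))"
definition Iff :: "('a, 'x, 'p) fm \<Rightarrow> ('a, 'x, 'p) fm \<Rightarrow> ('a, 'x, 'p) fm" where
  "Iff \<phi> \<psi> = Conj (Imp \<phi> \<psi>) (Imp \<psi> \<phi>)"
definition Dia :: "'x \<Rightarrow> 'a \<Rightarrow> ('a, 'x, 'p) fm \<Rightarrow> ('a, 'x, 'p) fm" where
  "Dia x a \<phi> = Neg (Asg x a (Neg \<phi>))"

fun Asgs :: "'x list \<Rightarrow> 'a list \<Rightarrow> ('a, 'x, 'p) fm \<Rightarrow> ('a, 'x, 'p) fm" where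
  "Asgs (x # xs) (a # as) \<phi> = Asg x a (Asgs xs as \<phi>)"
| "Asgs _ _ \<phi> = \<phi>"

fun Conjs :: "('a, 'x, 'p) fm list \<Rightarrow> ('a, 'x, 'p) fm" where
  "Conjs [] = Top"
| "Conjs (\<phi> # \<phi>s) = Conj \<phi> (Conjs \<phi>s)"

fun subst :: "('a, 'x, 'p) fm \<Rightarrow> 'x \<Rightarrow> 'x \<Rightarrow> ('a, 'x, 'p) fm" where
  "subst (Pred p z) y x = Pred p (if z = x then y else z)"
| "subst Top y x = Top"
| "subst (Neg \<phi>) y x = Neg (subst \<phi> y x)"
| "subst (Conj \<phi> \<psi>) y x = Conj (subst \<phi> y x) (subst \<psi> y x)"
| "subst (Asg z a \<phi>) y x = (if z = x then Asg z a \<phi> else Asg z a (subst \<phi> y x))"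
| "subst (K X \<alpha>) y x = K (if x \<in> X then insert y (X - {x}) else X) \<alpha>"

text \<open>phi[y/x] is admissible iff x has no free occurrence within the scope of any [y:=b].\<close>
fun admissible :: "('a, 'x, 'p) fm \<Rightarrow> 'x \<Rightarrow> 'x \<Rightarrow> bool" where
  "admissible (Pred p z) y x = True"
| "admissible Top y x = True"
| "admissible (Neg \<phi>) y x = admissible \<phi> y x"
| "admissible (Conj \<phi> \<psi>) y x = (admissible \<phi> y x \<and> admissible \<psi> y x)"
| "admissible (Asg z a \<phi>) y x =
     (z = x \<or> (if z = y then x \<notin> FV \<phi> else admissible \<phi> y x))"
| "admissible (K X \<alpha>) y x = True"

fun peval :: "(('a, 'x, 'p) fm \<Rightarrow> bool) \<Rightarrow> ('a, 'x, 'p) fm \<Rightarrow> bool" where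
  "peval v Top = True"
| "peval v (Neg \<phi>) = (\<not> peval v \<phi>)"
| "peval v (Conj \<phi> \<psi>) = (peval v \<phi> \<and> peval v \<psi>)"
| "peval v \<phi> = v \<phi>"

definition taut :: "('a, 'x, 'p) fm \<Rightarrow> bool" where
  "taut \<phi> \<longleftrightarrow> (\<forall>v. peval v \<phi>)"

inductive LEL :: "('a::finite, 'x::countable, 'p::countable) fm \<Rightarrow> bool" where
  Taut: "wf \<phi> \<Longrightarrow> taut \<phi> \<Longrightarrow> LEL \<phi>"
| K_dist: "finite X \<Longrightarrow> sentence \<alpha> \<Longrightarrow> sentence \<beta> \<Longrightarrow>
     LEL (Imp (K X (Imp \<alpha> \<beta>)) (Imp (K X \<alpha>) (K X \<beta>)))"
| K_mono: "finite Y \<Longrightarrow> X \<subseteq> Y \<Longrightarrow> sentence \<alpha> \<Longrightarrow> LEL (Imp (K X \<alpha>) (K Y \<alpha>))"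
| Asg_dist: "wf \<phi> \<Longrightarrow> wf \<psi> \<Longrightarrow>
     LEL (Imp (Asg x a (Imp \<phi> \<psi>)) (Imp (Asg x a \<phi>) (Asg x a \<psi>)))"
| Asg_func: "wf \<phi> \<Longrightarrow> LEL (Imp (Dia x a \<phi>) (Asg x a \<phi>))"
| Asg_vac: "wf \<phi> \<Longrightarrow> x \<notin> FV \<phi> \<Longrightarrow> LEL (Imp \<phi> (Asg x a \<phi>))"
| Asg_subst: "wf \<phi> \<Longrightarrow> admissible \<phi> y x \<Longrightarrow>
     LEL (Asg y a (Imp (Asg x a \<phi>) (subst \<phi> y x)))"
| Asg_comm: "wf \<phi> \<Longrightarrow> x \<noteq> y \<Longrightarrow>
     LEL (Imp (Asg x a (Asg y b \<phi>)) (Asg y b (Asg x a \<phi>)))"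
| Asg_all: "wf \<phi> \<Longrightarrow> set as = UNIV \<Longrightarrow>
     LEL (Imp (Conjs (map (\<lambda>a. Asg x a \<phi>) as)) \<phi>)"
| K_T: "finite X \<Longrightarrow> sentence \<alpha> \<Longrightarrow> LEL (Imp (K X \<alpha>) \<alpha>)"
| K_neg: "length xs = length as \<Longrightarrow> sentence \<alpha> \<Longrightarrow>
     LEL (Asgs xs as (Imp (Neg (K (set xs) \<alpha>))
                          (K (set xs) (Asgs xs as (Neg (K (set xs) \<alpha>))))))"
| K_self: "LEL (Asg x a (K {x} (Dia x a Top)))"
| K_pred: "LEL (Asg x a (Imp (Pred p x) (K {x} (Asg x a (Pred p x)))))"
| K_absent: "length xs = length as \<Longrightarrow> set bs = UNIV - set as \<Longrightarrow>
     LEL (Asgs xs as (Imp (Conjs (map (\<lambda>b. Asg x b Bot) bs))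
                          (K (set xs) (Conjs (map (\<lambda>b. Asg x b Bot) bs)))))"
| MP: "LEL (Imp \<phi> \<psi>) \<Longrightarrow> LEL \<phi> \<Longrightarrow> LEL \<psi>"
| Nec_K: "sentence \<alpha> \<Longrightarrow> LEL \<alpha> \<Longrightarrow> LEL (K {} \<alpha>)"
| Nec_Asg: "LEL \<phi> \<Longrightarrow> LEL (Asg x a \<phi>)"

inductive anf :: "('a, 'x, 'p) fm \<Rightarrow> bool" where
  "anf (Asg x a (Pred p x))"
| "anf (Asg x a Bot)"
| "anf Top"
| "anf \<gamma> \<Longrightarrow> anf (Neg \<gamma>)"
| "anf \<gamma> \<Longrightarrow> anf \<delta> \<Longrightarrow> anf (Conj \<gamma> \<delta>)"
| "length xs = length as \<Longrightarrow> anf \<gamma> \<Longrightarrow> anf (Asgs xs as (K (set xs) \<gamma>))"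

end

theory Submission
  imports Defs
begin

fun ctx :: "('x \<times> 'a) list \<Rightarrow> ('a, 'x, 'p) fm \<Rightarrow> ('a, 'x, 'p) fm" where
  "ctx [] \<phi> = \<phi>"
| "ctx ((x, a) # \<sigma>) \<phi> = Asg x a (ctx \<sigma> \<phi>)"

definition Or :: "('a, 'x, 'p) fm \<Rightarrow> ('a, 'x, 'p) fm \<Rightarrow> ('a, 'x, 'p) fm" where
  "Or A B = Neg (Conj (Neg A) (Neg B))"

fun fail :: "('x \<times> 'a) list \<Rightarrow> ('a, 'x, 'p) fm" where
  "fail [] = Bot"
| "fail ((x, a) # \<sigma>) = Or (Asg x a Bot) (fail \<sigma>)"

lemma peval_simps[simp]:
  "peval v (Imp A B) = (peval v A \<longrightarrow> peval v B)"
  "peval v (Iff A B) = (peval v A \<longleftrightarrow> peval v B)"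
  "peval v (Or A B) = (peval v A \<or> peval v B)"
  "peval v Bot = False"
  by (auto simp: Imp_def Iff_def Or_def Bot_def)

lemma wf_simps[simp]:
  "wf (Imp A B) = (wf A \<and> wf B)"
  "wf (Iff A B) = (wf A \<and> wf B)"
  "wf (Or A B) = (wf A \<and> wf B)"
  "wf Bot"
  "wf (Dia x a A) = wf A"
  by (auto simp: Imp_def Iff_def Or_def Bot_def Dia_def)

lemma FV_simps[simp]:
  "FV (Imp A B) = FV A \<union> FV B"
  "FV (Iff A B) = FV A \<union> FV B"
  "FV (Or A B) = FV A \<union> FV B"
  "FV Bot = {}"
  "FV (Dia x a A) = FV A - {x}"
  by (auto simp: Imp_def Iff_def Or_def Bot_def Dia_def)

lemma wf_ctx[simp]: "wf (ctx \<sigma> \<phi>) = wf \<phi>"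
  by (induction \<sigma> \<phi> rule: ctx.induct) auto

lemma FV_ctx[simp]: "FV (ctx \<sigma> \<phi>) = FV \<phi> - fst ` set \<sigma>"
  by (induction \<sigma> \<phi> rule: ctx.induct) auto

lemma ctx_append: "ctx (\<sigma> @ \<tau>) \<phi> = ctx \<sigma> (ctx \<tau> \<phi>)"
  by (induction \<sigma> \<phi> rule: ctx.induct) auto

lemma Asgs_ctx: "length xs = length as \<Longrightarrow> Asgs xs as \<phi> = ctx (zip xs as) \<phi>"
  by (induction xs as \<phi> rule: Asgs.induct) auto

lemma wf_fail[simp]: "wf (fail \<sigma>)" and FV_fail[simp]: "FV (fail \<sigma>) = {}"
  by (induction \<sigma> rule: fail.induct) auto

lemma wf_Asgs[simp]: "wf (Asgs xs as \<phi>) = wf \<phi>"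
  by (induction xs as \<phi> rule: Asgs.induct) auto

lemma wf_Conjs[simp]: "wf (Conjs l) = (\<forall>\<phi>\<in>set l. wf \<phi>)"
  by (induction l) auto

lemma FV_Conjs[simp]: "FV (Conjs l) = (\<Union>\<phi>\<in>set l. FV \<phi>)"
  by (induction l) auto

lemma wf_subst[simp]: "wf \<phi> \<Longrightarrow> wf (subst \<phi> y x)"
  by (induction \<phi> y x rule: subst.induct) auto

lemma FV_Asgs[simp]: "length xs = length as \<Longrightarrow> FV (Asgs xs as \<phi>) = FV \<phi> - set xs"
  by (induction xs as \<phi> rule: Asgs.induct) auto

lemma LEL_wf: "LEL \<phi> \<Longrightarrow> wf \<phi>"
  by (induction rule: LEL.induct) (auto simp: sentence_def intro: finite_subset)

lemma propN: "\<forall>A\<in>set As. LEL A \<Longrightarrow> wf C \<Longrightarrow> (\<And>v. \<forall>A\<in>set As. peval v A \<Longrightarrow> peval v C) \<Longrightarrow> LEL C"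
proof (induction As arbitrary: C)
  case Nil
  then show ?case by (auto intro!: LEL.Taut simp: taut_def)
next
  case (Cons A As)
  have "LEL (Imp A C)"
    using Cons by (intro Cons.IH) (auto dest: LEL_wf)
  then show ?case using Cons.prems(1) by (auto intro: LEL.MP)
qed

lemma prop1: "LEL A \<Longrightarrow> wf C \<Longrightarrow> (\<And>v. peval v A \<Longrightarrow> peval v C) \<Longrightarrow> LEL C"
  by (rule propN[of "[A]"]) auto
lemma prop2: "LEL A \<Longrightarrow> LEL B \<Longrightarrow> wf C \<Longrightarrow> (\<And>v. peval v A \<Longrightarrow> peval v B \<Longrightarrow> peval v C) \<Longrightarrow> LEL C"
  by (rule propN[of "[A,B]"]) auto
lemma prop3: "LEL A \<Longrightarrow> LEL B \<Longrightarrow> LEL D \<Longrightarrow> wf C \<Longrightarrow> (\<And>v. peval v A \<Longrightarrow> peval v B \<Longrightarrow> peval v D \<Longrightarrow> peval v C) \<Longrightarrow> LEL C"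
  by (rule propN[of "[A,B,D]"]) auto
lemma prop4: "LEL A \<Longrightarrow> LEL B \<Longrightarrow> LEL D \<Longrightarrow> LEL E \<Longrightarrow> wf C \<Longrightarrow> (\<And>v. peval v A \<Longrightarrow> peval v B \<Longrightarrow> peval v D \<Longrightarrow> peval v E \<Longrightarrow> peval v C) \<Longrightarrow> LEL C"
  by (rule propN[of "[A,B,D,E]"]) auto

lemma prop5: "LEL A \<Longrightarrow> LEL B \<Longrightarrow> LEL D \<Longrightarrow> LEL E \<Longrightarrow> LEL F \<Longrightarrow> wf C \<Longrightarrow> (\<And>v. peval v A \<Longrightarrow> peval v B \<Longrightarrow> peval v D \<Longrightarrow> peval v E \<Longrightarrow> peval v F \<Longrightarrow> peval v C) \<Longrightarrow> LEL C"
  by (rule propN[of "[A,B,D,E,F]"]) auto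

lemma taut_LEL: "wf C \<Longrightarrow> (\<And>v. peval v C) \<Longrightarrow> LEL C"
  by (auto intro!: LEL.Taut simp: taut_def)

lemma asg_mono: "LEL (Imp A B) \<Longrightarrow> LEL (Imp (Asg x a A) (Asg x a B))"
proof -
  assume h: "LEL (Imp A B)"
  then have w: "wf A" "wf B" using LEL_wf[OF h] by auto
  have "LEL (Asg x a (Imp A B))" using h by (rule LEL.Nec_Asg)
  then show ?thesis using LEL.Asg_dist[OF w, of x a] by (auto intro: LEL.MP)
qed

lemma asg_cong: "LEL (Iff A B) \<Longrightarrow> LEL (Iff (Asg x a A) (Asg x a B))"
proof -
  assume h: "LEL (Iff A B)"
  then have w: "wf A" "wf B" using LEL_wf[OF h] by auto
  have "LEL (Imp A B)" "LEL (Imp B A)" using h w by (auto intro: prop1)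
  then have "LEL (Imp (Asg x a A) (Asg x a B))" "LEL (Imp (Asg x a B) (Asg x a A))"
    by (auto intro: asg_mono)
  then show ?thesis using w by (auto intro: prop2)
qed

lemma ctx_cong: "LEL (Iff A B) \<Longrightarrow> LEL (Iff (ctx \<sigma> A) (ctx \<sigma> B))"
  by (induction \<sigma> A rule: ctx.induct) (auto intro: asg_cong)

lemma bot_imp: "wf C \<Longrightarrow> LEL (Imp (Asg x a Bot) (Asg x a C))"
  by (intro asg_mono taut_LEL) auto

lemma asg_conj: "wf A \<Longrightarrow> wf B \<Longrightarrow> LEL (Iff (Asg x a (Conj A B)) (Conj (Asg x a A) (Asg x a B)))"
proof -
  assume w: "wf A" "wf B"
  have 1: "LEL (Imp (Asg x a (Conj A B)) (Asg x a A))" using w by (intro asg_mono taut_LEL) auto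
  have 2: "LEL (Imp (Asg x a (Conj A B)) (Asg x a B))" using w by (intro asg_mono taut_LEL) auto
  have t: "LEL (Imp A (Imp B (Conj A B)))" using w by (intro taut_LEL) auto
  have 3: "LEL (Imp (Asg x a A) (Asg x a (Imp B (Conj A B))))" using t by (rule asg_mono)
  have 4: "LEL (Imp (Asg x a (Imp B (Conj A B))) (Imp (Asg x a B) (Asg x a (Conj A B))))"
    using w by (intro LEL.Asg_dist) auto
  show ?thesis using w by (rule_tac prop4[OF 1 2 3 4]) auto
qed

lemma asg_neg: "wf A \<Longrightarrow> LEL (Iff (Asg x a (Neg A)) (Or (Asg x a Bot) (Neg (Asg x a A))))"
proof -
  assume w: "wf A"
  have 1: "LEL (Iff (Asg x a (Conj (Neg A) A)) (Conj (Asg x a (Neg A)) (Asg x a A)))"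
    using w by (intro asg_conj) auto
  have 2: "LEL (Imp (Asg x a (Conj (Neg A) A)) (Asg x a Bot))"
    using w by (intro asg_mono taut_LEL) auto
  have 3: "LEL (Imp (Asg x a Bot) (Asg x a (Neg A)))" using w by (intro bot_imp) auto
  have 4: "LEL (Imp (Dia x a (Neg A)) (Asg x a (Neg A)))" using w by (intro LEL.Asg_func) auto
  have 5: "LEL (Imp (Asg x a (Neg (Neg A))) (Asg x a A))"
    using w by (intro asg_mono taut_LEL) auto
  have "LEL (Imp (Neg (Asg x a A)) (Asg x a (Neg A)))"
    using 4 5 w by (rule_tac prop2[OF 4 5]) (auto simp: Dia_def)
  then show ?thesis using w by (rule_tac prop4[OF 1 2 3]) auto
qed

lemma asg_or: "wf A \<Longrightarrow> wf B \<Longrightarrow> LEL (Iff (Asg x a (Or A B)) (Or (Asg x a A) (Asg x a B)))"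
proof -
  assume w: "wf A" "wf B"
  have 1: "LEL (Iff (Asg x a (Or A B)) (Or (Asg x a Bot) (Neg (Asg x a (Conj (Neg A) (Neg B))))))"
    unfolding Or_def[of A B] using w by (intro asg_neg) auto
  have 2: "LEL (Iff (Asg x a (Conj (Neg A) (Neg B))) (Conj (Asg x a (Neg A)) (Asg x a (Neg B))))"
    using w by (intro asg_conj) auto
  have 3: "LEL (Iff (Asg x a (Neg A)) (Or (Asg x a Bot) (Neg (Asg x a A))))" using w by (intro asg_neg)
  have 4: "LEL (Iff (Asg x a (Neg B)) (Or (Asg x a Bot) (Neg (Asg x a B))))" using w by (intro asg_neg)
  have 5: "LEL (Imp (Asg x a Bot) (Asg x a A))" using w by (intro bot_imp)
  have i1: "LEL (Imp (Asg x a (Or A B)) (Or (Asg x a A) (Asg x a B)))"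
    using w by (rule_tac prop5[OF 1 2 3 4 5]) auto
  have i2: "LEL (Imp (Or (Asg x a A) (Asg x a B)) (Asg x a (Or A B)))"
    using w by (rule_tac prop5[OF 1 2 3 4 5]) auto
  show ?thesis by (rule prop2[OF i1 i2]) (use w in auto)
qed

lemma asg_vac: "wf \<psi> \<Longrightarrow> x \<notin> FV \<psi> \<Longrightarrow> LEL (Iff (Asg x a \<psi>) (Or (Asg x a Bot) \<psi>))"
proof -
  assume w: "wf \<psi>" and x: "x \<notin> FV \<psi>"
  have 1: "LEL (Imp (Neg \<psi>) (Asg x a (Neg \<psi>)))" using w x by (intro LEL.Asg_vac) auto
  have 2: "LEL (Iff (Asg x a (Neg \<psi>)) (Or (Asg x a Bot) (Neg (Asg x a \<psi>))))" using w by (intro asg_neg)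
  have 3: "LEL (Imp \<psi> (Asg x a \<psi>))" using w x by (intro LEL.Asg_vac) auto
  have 4: "LEL (Imp (Asg x a Bot) (Asg x a \<psi>))" using w by (intro bot_imp)
  show ?thesis using w by (rule_tac prop4[OF 1 2 3 4]) auto
qed


lemma anf_sentence: "anf \<gamma> \<Longrightarrow> wf \<gamma> \<and> FV \<gamma> = {}"
  by (induction rule: anf.induct) (auto simp: Bot_def)

lemma anf_Bot: "anf Bot"
  unfolding Bot_def by (intro anf.intros)

lemma anf_Or: "anf A \<Longrightarrow> anf B \<Longrightarrow> anf (Or A B)"
  unfolding Or_def by (intro anf.intros)

lemma anf_fail: "anf (fail \<sigma>)"
  by (induction \<sigma> rule: fail.induct) (auto intro: anf_Or anf_Bot anf.intros)

lemma anf_ctxK: "anf \<gamma> \<Longrightarrow> anf (ctx \<sigma> (K (set (map fst \<sigma>)) \<gamma>))"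
  using anf.intros(6)[of "map fst \<sigma>" "map snd \<sigma>" \<gamma>] by (simp add: Asgs_ctx zip_map_fst_snd)

lemma ctx_top: "LEL (Iff (ctx \<sigma> Top) Top)"
proof -
  have "LEL (ctx \<sigma> Top)"
    by (induction \<sigma>) (auto intro: LEL.Nec_Asg taut_LEL)
  then show ?thesis by (rule prop1) auto
qed

lemma ctx_conj: "wf A \<Longrightarrow> wf B \<Longrightarrow> LEL (Iff (ctx \<sigma> (Conj A B)) (Conj (ctx \<sigma> A) (ctx \<sigma> B)))"
proof (induction \<sigma>)
  case Nil
  then show ?case by (intro taut_LEL) auto
next
  case (Cons p \<sigma>)
  obtain y c where p: "p = (y, c)" by (cases p)
  have 1: "LEL (Iff (Asg y c (ctx \<sigma> (Conj A B))) (Asg y c (Conj (ctx \<sigma> A) (ctx \<sigma> B))))"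
    using Cons by (intro asg_cong) auto
  have 2: "LEL (Iff (Asg y c (Conj (ctx \<sigma> A) (ctx \<sigma> B))) (Conj (Asg y c (ctx \<sigma> A)) (Asg y c (ctx \<sigma> B))))"
    using Cons by (intro asg_conj) auto
  show ?case unfolding p by (rule prop2[OF 1 2]) (use Cons in auto)
qed

lemma ctx_neg: "wf A \<Longrightarrow> LEL (Iff (ctx \<sigma> (Neg A)) (Or (fail \<sigma>) (Neg (ctx \<sigma> A))))"
proof (induction \<sigma>)
  case Nil
  then show ?case by (intro taut_LEL) auto
next
  case (Cons p \<sigma>)
  obtain y c where p: "p = (y, c)" by (cases p)
  have 1: "LEL (Iff (Asg y c (ctx \<sigma> (Neg A))) (Asg y c (Or (fail \<sigma>) (Neg (ctx \<sigma> A)))))"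
    using Cons by (intro asg_cong) auto
  have 2: "LEL (Iff (Asg y c (Or (fail \<sigma>) (Neg (ctx \<sigma> A)))) (Or (Asg y c (fail \<sigma>)) (Asg y c (Neg (ctx \<sigma> A)))))"
    using Cons by (intro asg_or) auto
  have 3: "LEL (Iff (Asg y c (fail \<sigma>)) (Or (Asg y c Bot) (fail \<sigma>)))"
    by (intro asg_vac) auto
  have 4: "LEL (Iff (Asg y c (Neg (ctx \<sigma> A))) (Or (Asg y c Bot) (Neg (Asg y c (ctx \<sigma> A)))))"
    using Cons by (intro asg_neg) auto
  show ?case unfolding p by (rule prop4[OF 1 2 3 4]) (use Cons in auto)
qed

lemma ctx_pred: "(x \<in> fst ` set \<sigma> \<longrightarrow> (\<exists>\<gamma>. anf \<gamma> \<and> LEL (Iff (ctx \<sigma> (Pred q x)) \<gamma>))) \<and>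
   (x \<notin> fst ` set \<sigma> \<longrightarrow> LEL (Iff (ctx \<sigma> (Pred q x)) (Or (fail \<sigma>) (Pred q x))))"
proof (induction \<sigma>)
  case Nil
  then show ?case by (auto intro: taut_LEL)
next
  case (Cons p \<sigma>)
  obtain y c where p: "p = (y, c)" by (cases p)
  show ?case
  proof (cases "x \<in> fst ` set \<sigma>")
    case True
    then obtain \<gamma> where g: "anf \<gamma>" "LEL (Iff (ctx \<sigma> (Pred q x)) \<gamma>)" using Cons.IH by blast
    have s: "wf \<gamma>" "FV \<gamma> = {}" using anf_sentence[OF g(1)] by auto
    have 1: "LEL (Iff (Asg y c (ctx \<sigma> (Pred q x))) (Asg y c \<gamma>))" using g by (intro asg_cong)
    have 2: "LEL (Iff (Asg y c \<gamma>) (Or (Asg y c Bot) \<gamma>))" using s by (intro asg_vac) auto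
    have "LEL (Iff (ctx (p # \<sigma>) (Pred q x)) (Or (Asg y c Bot) \<gamma>))"
      unfolding p by (rule prop2[OF 1 2]) (use s in auto)
    moreover have "anf (Or (Asg y c Bot) \<gamma>)" using g by (intro anf_Or anf.intros)
    ultimately show ?thesis using True by auto
  next
    case False
    then have ih: "LEL (Iff (ctx \<sigma> (Pred q x)) (Or (fail \<sigma>) (Pred q x)))" using Cons.IH by blast
    have 1: "LEL (Iff (Asg y c (ctx \<sigma> (Pred q x))) (Asg y c (Or (fail \<sigma>) (Pred q x))))"
      using ih by (intro asg_cong)
    show ?thesis
    proof (cases "y = x")
      case True
      have 2: "LEL (Iff (Asg y c (Or (fail \<sigma>) (Pred q x))) (Or (Asg y c (fail \<sigma>)) (Asg y c (Pred q x))))"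
        by (intro asg_or) auto
      have 3: "LEL (Iff (Asg y c (fail \<sigma>)) (Or (Asg y c Bot) (fail \<sigma>)))"
        by (intro asg_vac) auto
      have "LEL (Iff (ctx (p # \<sigma>) (Pred q x)) (Or (Or (Asg y c Bot) (fail \<sigma>)) (Asg x c (Pred q x))))"
        unfolding p using True by (rule_tac prop3[OF 1 2 3]) auto
      moreover have "anf (Or (Or (Asg y c Bot) (fail \<sigma>)) (Asg x c (Pred q x)))"
        by (intro anf_Or anf.intros anf_fail)
      ultimately show ?thesis using True p by auto
    next
      case False
      have 2: "LEL (Iff (Asg y c (Or (fail \<sigma>) (Pred q x))) (Or (Asg y c Bot) (Or (fail \<sigma>) (Pred q x))))"
        using False by (intro asg_vac) auto
      have "LEL (Iff (ctx (p # \<sigma>) (Pred q x)) (Or (fail (p # \<sigma>)) (Pred q x)))"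
        unfolding p by (rule prop2[OF 1 2]) auto
      then show ?thesis using False \<open>x \<notin> fst ` set \<sigma>\<close> p by auto
    qed
  qed
qed

lemma ctx_K: "finite X \<Longrightarrow> wf \<gamma> \<Longrightarrow> FV \<gamma> = {} \<Longrightarrow>
  LEL (Iff (ctx \<sigma> (K X \<gamma>)) (Or (fail (filter (\<lambda>p. fst p \<notin> X) \<sigma>)) (ctx (filter (\<lambda>p. fst p \<in> X) \<sigma>) (K X \<gamma>))))"
proof (induction \<sigma>)
  case Nil
  then show ?case by (intro taut_LEL) auto
next
  case (Cons p \<sigma>)
  obtain y c where p: "p = (y, c)" by (cases p)
  let ?F = "fail (filter (\<lambda>p. fst p \<notin> X) \<sigma>)"
  let ?C = "ctx (filter (\<lambda>p. fst p \<in> X) \<sigma>) (K X \<gamma>)"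
  show ?case
  proof (cases "y \<in> X")
    case False
    have 1: "LEL (Iff (Asg y c (ctx \<sigma> (K X \<gamma>))) (Or (Asg y c Bot) (ctx \<sigma> (K X \<gamma>))))"
      using Cons False by (intro asg_vac) auto
    have "LEL (Iff (Asg y c (ctx \<sigma> (K X \<gamma>))) (Or (Or (Asg y c Bot) ?F) ?C))"
      by (rule prop2[OF 1 Cons.IH[OF Cons.prems]]) (use Cons in auto)
    then show ?thesis unfolding p using False by simp
  next
    case True
    have 1: "LEL (Iff (Asg y c (ctx \<sigma> (K X \<gamma>))) (Asg y c (Or ?F ?C)))"
      using Cons by (intro asg_cong) auto
    have 2: "LEL (Iff (Asg y c (Or ?F ?C)) (Or (Asg y c ?F) (Asg y c ?C)))"
      using Cons by (intro asg_or) auto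
    have 3: "LEL (Iff (Asg y c ?F) (Or (Asg y c Bot) ?F))"
      by (intro asg_vac) auto
    have 4: "LEL (Imp (Asg y c Bot) (Asg y c ?C))"
      using Cons by (intro bot_imp) auto
    have "LEL (Iff (Asg y c (ctx \<sigma> (K X \<gamma>))) (Or ?F (Asg y c ?C)))"
      by (rule prop4[OF 1 2 3 4]) (use Cons in auto)
    then show ?thesis unfolding p using True by simp
  qed
qed

lemma K_imp: "LEL (Imp \<beta> \<gamma>) \<Longrightarrow> sentence \<beta> \<Longrightarrow> sentence \<gamma> \<Longrightarrow> finite X \<Longrightarrow> LEL (Imp (K X \<beta>) (K X \<gamma>))"
proof -
  assume h: "LEL (Imp \<beta> \<gamma>)" and s: "sentence \<beta>" "sentence \<gamma>" and f: "finite X"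
  have si: "sentence (Imp \<beta> \<gamma>)" using s by (auto simp: sentence_def)
  have "LEL (K {} (Imp \<beta> \<gamma>))" using si h by (rule LEL.Nec_K)
  moreover have "LEL (Imp (K {} (Imp \<beta> \<gamma>)) (K X (Imp \<beta> \<gamma>)))" using f si by (intro LEL.K_mono) auto
  ultimately have "LEL (K X (Imp \<beta> \<gamma>))" by (rule_tac LEL.MP)
  moreover have "LEL (Imp (K X (Imp \<beta> \<gamma>)) (Imp (K X \<beta>) (K X \<gamma>)))" using f s by (intro LEL.K_dist)
  ultimately show ?thesis by (rule_tac LEL.MP)
qed

lemma K_cong: "LEL (Iff \<beta> \<gamma>) \<Longrightarrow> sentence \<beta> \<Longrightarrow> sentence \<gamma> \<Longrightarrow> finite X \<Longrightarrow> LEL (Iff (K X \<beta>) (K X \<gamma>))"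
proof -
  assume h: "LEL (Iff \<beta> \<gamma>)" and s: "sentence \<beta>" "sentence \<gamma>" and f: "finite X"
  have w: "wf \<beta>" "wf \<gamma>" using s by (auto simp: sentence_def)
  have "LEL (Imp \<beta> \<gamma>)" "LEL (Imp \<gamma> \<beta>)" using h w by (auto intro: prop1)
  then have i1: "LEL (Imp (K X \<beta>) (K X \<gamma>))" and i2: "LEL (Imp (K X \<gamma>) (K X \<beta>))"
    using s f by (auto intro: K_imp)
  show ?thesis by (rule prop2[OF i1 i2]) (use s f in \<open>auto simp: sentence_def\<close>)
qed

lemma main: "wf \<phi> \<Longrightarrow> FV \<phi> \<subseteq> fst ` set \<sigma> \<Longrightarrow> \<exists>\<gamma>. anf \<gamma> \<and> LEL (Iff (ctx \<sigma> \<phi>) \<gamma>)"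
proof (induction \<phi> arbitrary: \<sigma>)
  case (Pred q x)
  then have "x \<in> fst ` set \<sigma>" by simp
  then show ?case using ctx_pred[of x \<sigma> q] by blast
next
  case Top
  show ?case by (intro exI[of _ Top] conjI anf.intros ctx_top)
next
  case (Neg \<phi>)
  then have "\<exists>\<gamma>. anf \<gamma> \<and> LEL (Iff (ctx \<sigma> \<phi>) \<gamma>)" by simp
  then obtain \<gamma> where g: "anf \<gamma>" "LEL (Iff (ctx \<sigma> \<phi>) \<gamma>)" by blast
  have s: "wf \<gamma>" using anf_sentence[OF g(1)] by auto
  have "LEL (Iff (ctx \<sigma> (Neg \<phi>)) (Or (fail \<sigma>) (Neg \<gamma>)))"
  proof -
    have c: "LEL (Iff (ctx \<sigma> (Neg \<phi>)) (Or (fail \<sigma>) (Neg (ctx \<sigma> \<phi>))))"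
      using Neg.prems by (intro ctx_neg) auto
    show ?thesis by (rule prop2[OF c g(2)]) (use Neg.prems s in auto)
  qed
  moreover have "anf (Or (fail \<sigma>) (Neg \<gamma>))" using g by (intro anf_Or anf_fail anf.intros)
  ultimately show ?case by blast
next
  case (Conj \<phi> \<psi>)
  obtain \<gamma> where g1: "anf \<gamma>" "LEL (Iff (ctx \<sigma> \<phi>) \<gamma>)"
    using Conj.IH(1)[of \<sigma>] Conj.prems by auto
  obtain \<delta> where g2: "anf \<delta>" "LEL (Iff (ctx \<sigma> \<psi>) \<delta>)"
    using Conj.IH(2)[of \<sigma>] Conj.prems by auto
  note g = g1 g2
  have s: "wf \<gamma>" "wf \<delta>" using anf_sentence[OF g(1)] anf_sentence[OF g(3)] by auto
  have "LEL (Iff (ctx \<sigma> (Conj \<phi> \<psi>)) (Conj \<gamma> \<delta>))"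
  proof -
    have c: "LEL (Iff (ctx \<sigma> (Conj \<phi> \<psi>)) (Conj (ctx \<sigma> \<phi>) (ctx \<sigma> \<psi>)))"
      using Conj.prems by (intro ctx_conj) auto
    show ?thesis by (rule prop3[OF c g(2) g(4)]) (use Conj.prems s in auto)
  qed
  moreover have "anf (Conj \<gamma> \<delta>)" using g by (intro anf.intros)
  ultimately show ?case by blast
next
  case (Asg x a \<phi>)
  have "FV \<phi> \<subseteq> fst ` set (\<sigma> @ [(x, a)])" using Asg.prems by auto
  then obtain \<gamma> where "anf \<gamma>" "LEL (Iff (ctx (\<sigma> @ [(x, a)]) \<phi>) \<gamma>)"
    using Asg.IH[of "\<sigma> @ [(x, a)]"] Asg.prems by auto
  then show ?case by (auto simp: ctx_append)
next
  case (K X \<beta>)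
  have w: "finite X" "wf \<beta>" "FV \<beta> = {}" using K.prems by auto
  then obtain \<gamma> where g: "anf \<gamma>" "LEL (Iff (ctx [] \<beta>) \<gamma>)" using K.IH[of "[]"] by auto
  have s: "wf \<gamma>" "FV \<gamma> = {}" using anf_sentence[OF g(1)] by auto
  let ?in = "filter (\<lambda>p. fst p \<in> X) \<sigma>"
  let ?out = "filter (\<lambda>p. fst p \<notin> X) \<sigma>"
  have 1: "LEL (Iff (K X \<beta>) (K X \<gamma>))" using g w s by (intro K_cong) (auto simp: sentence_def)
  have 2: "LEL (Iff (ctx \<sigma> (K X \<beta>)) (ctx \<sigma> (K X \<gamma>)))" using 1 by (rule ctx_cong)
  have 3: "LEL (Iff (ctx \<sigma> (K X \<gamma>)) (Or (fail ?out) (ctx ?in (K X \<gamma>))))" using w s by (intro ctx_K)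
  have X: "set (map fst ?in) = X" using K.prems by auto
  have "LEL (Iff (ctx \<sigma> (K X \<beta>)) (Or (fail ?out) (ctx ?in (K X \<gamma>))))"
    by (rule prop2[OF 2 3]) (use w s in auto)
  moreover have "anf (Or (fail ?out) (ctx ?in (K X \<gamma>)))"
    using anf_ctxK[OF g(1), of ?in] X by (auto intro: anf_Or anf_fail)
  ultimately show ?case by blast
qed

theorem proposition6:
  fixes \<alpha> :: "('a::finite, 'x::countable, 'p::countable) fm"
  assumes "sentence \<alpha>"
  shows "\<exists>\<gamma>. anf \<gamma> \<and> LEL (Iff \<alpha> \<gamma>)"
  using main[of \<alpha> "[]"] assms by (auto simp: sentence_def)

end
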